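(* Consider two CDNs, $CDN_1$ and $CDN_2$, with performance parameters $0\le \beta_1<\beta_2<1$, competing by prices in the model described in the context. Let $(w_1^*,w_2^* )$ be a Nash equilibrium in prices at which both CDNs attract a set of content providers of positive measure, and let $J_k^*=J_k(w_1^*,w_2^* )$ be the equilibrium revenues. Then $$J_1^*>4J_2^*.$$
   Context: Each $CDN_k$ ($k=1,2$) has a fixed performance parameter $\beta_k\in[0,1)$ (ratio of new to old user latency; smaller is better) and announces a price $w_k\ge 0$. There is a continuum of content providers of total mass $\Lambda>0$ whose sensitivity parameters $\theta$ are uniformly distributed on $[0,1]$. A content provider with sensitivity $\theta$ that hires $CDN_k$ obtains payoff $U(\theta,k)=\theta(1-\beta_k)-w_k$; hiring no CDN gives payoff $0$. Each content provider hires at most one CDN and chooses an option (a CDN or none) of maximum payoff (indifferent providers form a set of measure zero in the situations considered). $\Lambda_k(w_1,w_2)$ is $\Lambda$ times the measure of the set of $\theta\in[0,1]$ choosing $CDN_k$, and the revenue of $CDN_k$ is $J_k(w_1,w_2)=\Lambda_k(w_1,w_2)\,w_k$. A Nash equilibrium is a pair $(w_1^*,w_2^* )$ such that $J_1(w_1^*,w_2^* )\ge J_1(w_1,w_2^* )$ for all $w_1\ge0$ and $J_2(w_1^*,w_2^* )\ge J_2(w_1^*,w_2)$ for all $w_2\ge 0$. *)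

theory Defs
  imports "HOL-Analysis.Analysis"
begin

definition cp_payoff :: "real \<Rightarrow> real \<Rightarrow> real \<Rightarrow> real" where
  "cp_payoff beta w theta = theta * (1 - beta) - w"

text \<open>Set of sensitivities in [0,1] that strictly prefer the CDN (beta, w) to the
  other CDN (beta', w') and to hiring no CDN (payoff 0).\<close>
definition choosers :: "real \<Rightarrow> real \<Rightarrow> real \<Rightarrow> real \<Rightarrow> real set" where
  "choosers beta w beta' w' =
     {theta \<in> {0..1}. cp_payoff beta w theta > cp_payoff beta' w' theta \<and> cp_payoff beta w theta > 0}"

definition demand :: "real \<Rightarrow> real \<Rightarrow> real \<Rightarrow> real \<Rightarrow> real \<Rightarrow> real" where
  "demand Lam beta w beta' w' = Lam * measure lborel (choosers beta w beta' w')"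

definition Lam1 :: "real \<Rightarrow> real \<Rightarrow> real \<Rightarrow> real \<Rightarrow> real \<Rightarrow> real" where
  "Lam1 Lam b1 b2 w1 w2 = demand Lam b1 w1 b2 w2"

definition Lam2 :: "real \<Rightarrow> real \<Rightarrow> real \<Rightarrow> real \<Rightarrow> real \<Rightarrow> real" where
  "Lam2 Lam b1 b2 w1 w2 = demand Lam b2 w2 b1 w1"

definition J1 :: "real \<Rightarrow> real \<Rightarrow> real \<Rightarrow> real \<Rightarrow> real \<Rightarrow> real" where
  "J1 Lam b1 b2 w1 w2 = Lam1 Lam b1 b2 w1 w2 * w1"

definition J2 :: "real \<Rightarrow> real \<Rightarrow> real \<Rightarrow> real \<Rightarrow> real \<Rightarrow> real" where
  "J2 Lam b1 b2 w1 w2 = Lam2 Lam b1 b2 w1 w2 * w2"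

definition nash_eq :: "real \<Rightarrow> real \<Rightarrow> real \<Rightarrow> real \<Rightarrow> real \<Rightarrow> bool" where
  "nash_eq Lam b1 b2 w1 w2 \<longleftrightarrow> w1 \<ge> 0 \<and> w2 \<ge> 0 \<and>
     (\<forall>w. w \<ge> 0 \<longrightarrow> J1 Lam b1 b2 w1 w2 \<ge> J1 Lam b1 b2 w w2) \<and>
     (\<forall>w. w \<ge> 0 \<longrightarrow> J2 Lam b1 b2 w1 w2 \<ge> J2 Lam b1 b2 w1 w)"

end

theory Submission imports Defs begin

lemma ev_lin: "(0::real) < c0 \<Longrightarrow> eventually (\<lambda>s. 0 < c0 + s*c1) (at_right 0)"
proof -
  assume h: "0 < c0"
  have "((\<lambda>s. c0 + s*c1) \<longlongrightarrow> c0 + 0*c1) (at_right (0::real))"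
    by (intro tendsto_intros)
  then show ?thesis using h order_tendstoD(1) by fastforce
qed

lemma dem1:
  fixes b1 b2 w w2 :: real
  assumes "0 \<le> b1" "b1 < b2" "b2 < 1" "w2 \<le> w" "w \<le> w2 + (b2-b1)" "w*(1-b2) \<ge> w2*(1-b1)"
  shows "measure lborel (choosers b1 w b2 w2) = 1 - (w-w2)/(b2-b1)"
proof -
  define c where "c = (w-w2)/(b2-b1)"
  have d: "b2 - b1 > 0" using assms by simp
  have c0: "0 \<le> c" and c1: "c \<le> 1" using assms d by (auto simp: c_def field_simps)
  have cw: "c*(1-b1) \<ge> w" using assms d unfolding c_def
    by (simp add: field_simps)
  have "choosers b1 w b2 w2 = {c<..1}"
  proof (rule set_eqI)
    fix x
    have e1: "(x*(1-b1) - w > x*(1-b2) - w2) \<longleftrightarrow> c < x"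
      unfolding c_def using d by (simp add: field_simps)
    have e2: "c < x \<Longrightarrow> x*(1-b1) > w"
      using cw assms by (smt (verit) mult_strict_right_mono)
    show "x \<in> choosers b1 w b2 w2 \<longleftrightarrow> x \<in> {c<..1}"
      unfolding choosers_def cp_payoff_def using e1 e2 c0 by auto
  qed
  then show ?thesis using c1 by (simp add: c_def)
qed

lemma dem2:
  fixes b1 b2 w w1 :: real
  assumes "0 \<le> b1" "b1 < b2" "b2 < 1" "0 \<le> w" "w*(b2-b1) \<le> (w1-w)*(1-b2)" "w1 - w \<le> b2-b1"
  shows "measure lborel (choosers b2 w b1 w1) = (w1-w)/(b2-b1) - w/(1-b2)"
proof -
  define u where "u = (w1-w)/(b2-b1)"
  define l where "l = w/(1-b2)"
  have d: "b2 - b1 > 0" "1 - b2 > 0" using assms by simp_all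
  have l0: "0 \<le> l" using assms d by (simp add: l_def)
  have u1: "u \<le> 1" using assms d by (simp add: u_def field_simps)
  have lu: "l \<le> u" using assms d unfolding l_def u_def by (simp add: field_simps)
  have "choosers b2 w b1 w1 = {l<..<u}"
  proof (rule set_eqI)
    fix x
    have e1: "(x*(1-b2) - w > x*(1-b1) - w1) \<longleftrightarrow> x < u"
      unfolding u_def using d by (simp add: field_simps)
    have e2: "(x*(1-b2) - w > 0) \<longleftrightarrow> l < x"
      unfolding l_def using d by (simp add: field_simps)
    show "x \<in> choosers b2 w b1 w1 \<longleftrightarrow> x \<in> {l<..<u}"
      unfolding choosers_def cp_payoff_def using e1 e2 l0 u1 by auto
  qed
  then show ?thesis using lu by (simp add: u_def l_def)
qed

lemma pos_nonempty: "measure lborel A > 0 \<Longrightarrow> \<exists>x. x \<in> A"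
  by (metis all_not_in_conv less_irrefl measure_empty)

theorem theorem1:
  fixes Lam b1 b2 w1 w2 :: real
  assumes "Lam > 0"
    and "0 \<le> b1" and "b1 < b2" and "b2 < 1"
    and "nash_eq Lam b1 b2 w1 w2"
    and "Lam1 Lam b1 b2 w1 w2 > 0" and "Lam2 Lam b1 b2 w1 w2 > 0"
  shows "J1 Lam b1 b2 w1 w2 > 4 * J2 Lam b1 b2 w1 w2"
proof -
  define d where "d = b2 - b1"
  define a1 where "a1 = 1 - b1"
  define a2 where "a2 = 1 - b2"
  have d0: "d > 0" and a20: "a2 > 0" and a1e: "a1 = a2 + d"
    using assms by (auto simp: d_def a1_def a2_def)
  have w10: "w1 \<ge> 0" and w20: "w2 \<ge> 0"
    and N1: "\<And>w. w \<ge> 0 \<Longrightarrow> J1 Lam b1 b2 w w2 \<le> J1 Lam b1 b2 w1 w2"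
    and N2: "\<And>w. w \<ge> 0 \<Longrightarrow> J2 Lam b1 b2 w1 w \<le> J2 Lam b1 b2 w1 w2"
    using assms(5) unfolding nash_eq_def by auto
  obtain x where x: "x \<in> choosers b1 w1 b2 w2"
    using assms(6,1) pos_nonempty unfolding Lam1_def demand_def
    by (metis zero_less_mult_pos)
  obtain y where y: "y \<in> choosers b2 w2 b1 w1"
    using assms(7,1) pos_nonempty unfolding Lam2_def demand_def
    by (metis zero_less_mult_pos)
  have x1: "x \<le> 1" and xd: "x * d > w1 - w2"
    using x unfolding choosers_def cp_payoff_def d_def by (auto simp: algebra_simps)
  have hA: "w1 - w2 < d"
  proof -
    have "x * d \<le> 1 * d" using x1 d0 by (intro mult_right_mono) auto
    then show ?thesis using xd by simp
  qed
  have yd: "y * d < w1 - w2" and ya: "y * a2 > w2"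
    using y unfolding choosers_def cp_payoff_def d_def a2_def by (auto simp: algebra_simps)
  have hB: "w2 * d < (w1 - w2) * a2"
  proof -
    have "w2 * d < y * a2 * d" using ya d0 by simp
    also have "\<dots> = (y*d) * a2" by simp
    also have "\<dots> < (w1 - w2) * a2" using yd a20 by simp
    finally show ?thesis .
  qed
  have hC: "w1 - w2 > 0" using hB w20 d0 a20
    by (smt (verit) mult_nonneg_nonneg mult_le_0_iff)
  have hD: "w1 * a2 > w2 * a1" using hB a1e by (simp add: algebra_simps)
  have J1f: "J1 Lam b1 b2 w w2 = Lam * (1 - (w - w2)/d) * w"
    if "w2 \<le> w" "w \<le> w2 + d" "w * a2 \<ge> w2 * a1" for w
    using dem1[of b1 b2 w2 w] that assms(2-4)
    unfolding J1_def Lam1_def demand_def d_def a1_def a2_def by simp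
  have J2f: "J2 Lam b1 b2 w1 w = Lam * ((w1 - w)/d - w/a2) * w"
    if "0 \<le> w" "w * d \<le> (w1 - w) * a2" "w1 - w \<le> d" for w
    using dem2[of b1 b2 w w1] that assms(2-4)
    unfolding J2_def Lam2_def demand_def d_def a1_def a2_def by simp
  \<comment> \<open>first order condition for CDN1\<close>
  define k1 where "k1 = 1 - (2*w1 - w2)/d"
  have k1z: "k1 = 0"
  proof (rule ccontr)
    assume nz: "k1 \<noteq> 0"
    have ev: "eventually (\<lambda>s. 0 < s \<and> 0 < d + s*(-1) \<and> 0 < (w1 - w2) + s*k1
        \<and> 0 < (w2 + d - w1) + s*(-k1) \<and> 0 < (w1*a2 - w2*a1) + s*(k1*a2)) (at_right 0)"
      using hA hC hD d0
      by (intro eventually_conj eventually_at_right_less ev_lin) auto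
    then obtain s where s: "0 < s" "0 < d + s*(-1)" "0 < (w1 - w2) + s*k1"
        "0 < (w2 + d - w1) + s*(-k1)" "0 < (w1*a2 - w2*a1) + s*(k1*a2)"
      using eventually_happens[OF ev] by auto
    define w where "w = w1 + s*k1"
    have c1: "w2 \<le> w" "w \<le> w2 + d" "w * a2 \<ge> w2 * a1" using s
      by (auto simp: w_def algebra_simps)
    have alg: "Lam * (1 - (w - w2)/d) * w - Lam * (1 - (w1 - w2)/d) * w1 = Lam * (s * k1^2 * (1 - s/d))"
      unfolding w_def k1_def using d0 by (simp add: field_simps power2_eq_square)
    have "J1 Lam b1 b2 w w2 - J1 Lam b1 b2 w1 w2 = Lam * (s * k1^2 * (1 - s/d))"
      using J1f[OF c1] J1f[of w1] hA hC hD alg by simp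
    moreover have "Lam * (s * k1^2 * (1 - s/d)) > 0"
      using assms(1) s nz d0 by (simp add: field_simps)
    moreover have "w \<ge> 0" using c1 w20 by simp
    ultimately show False using N1 by fastforce
  qed
  \<comment> \<open>first order condition for CDN2\<close>
  define q where "q = 1/d + 1/a2"
  have q0: "q > 0" using d0 a20 by (simp add: q_def add_pos_pos)
  define k2 where "k2 = w1/d - 2*w2*q"
  have k2z: "k2 = 0"
  proof (rule ccontr)
    assume nz: "k2 \<noteq> 0"
    have ev: "eventually (\<lambda>s. 0 < s \<and> 0 < 1 + s*(-q) \<and> 0 \<le> w2 + s*k2
        \<and> 0 < (w1 - w2)*a2 - w2*d + s*(-k2*d - k2*a2) \<and> 0 < (d - w1 + w2) + s*k2) (at_right 0)"
    proof -
      have "eventually (\<lambda>s. 0 \<le> w2 + s*k2) (at_right 0)"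
      proof (cases "w2 > 0")
        case True
        then show ?thesis using ev_lin[of w2 k2] by (auto elim: eventually_mono)
      next
        case False
        then have "w2 = 0" using w20 by simp
        then have "k2 > 0" using hC d0 by (simp add: k2_def)
        then show ?thesis using \<open>w2 = 0\<close> eventually_at_right_less[of "0::real"]
          by (auto elim: eventually_mono)
      qed
      then show ?thesis using hA hB
        by (intro eventually_conj eventually_at_right_less ev_lin) auto
    qed
    then obtain s where s: "0 < s" "0 < 1 + s*(-q)" "0 \<le> w2 + s*k2"
        "0 < (w1 - w2)*a2 - w2*d + s*(-k2*d - k2*a2)" "0 < (d - w1 + w2) + s*k2"
      using eventually_happens[OF ev] by auto
    define w where "w = w2 + s*k2"
    have c2: "0 \<le> w" "w * d \<le> (w1 - w) * a2" "w1 - w \<le> d" using s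
      by (auto simp: w_def algebra_simps)
    have alg: "Lam * ((w1 - w)/d - w/a2) * w - Lam * ((w1 - w2)/d - w2/a2) * w2 = Lam * (s * k2^2 * (1 - s*q))"
      unfolding w_def k2_def q_def using d0 a20 by (simp add: field_simps power2_eq_square)
    have "J2 Lam b1 b2 w1 w - J2 Lam b1 b2 w1 w2 = Lam * (s * k2^2 * (1 - s*q))"
      using J2f[OF c2] J2f[of w2] hA hB w20 alg by simp
    moreover have "Lam * (s * k2^2 * (1 - s*q)) > 0"
      using assms(1) s nz by (simp add: field_simps)
    ultimately show False using N2[OF c2(1)] by fastforce
  qed
  have e1: "2*w1 = d + w2" using k1z d0 unfolding k1_def by (simp add: field_simps)
  have e2: "w1 * a2 = 2 * w2 * a1" using k2z d0 a20 a1e unfolding k2_def q_def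
    by (simp add: field_simps)
  have J1v: "J1 Lam b1 b2 w1 w2 = Lam * (1 - (w1 - w2)/d) * w1"
    using J1f[of w1] hA hC hD by simp
  have J2v: "J2 Lam b1 b2 w1 w2 = Lam * ((w1 - w2)/d - w2/a2) * w2"
    using J2f[of w2] hA hB w20 by simp
  have w2p: "w2 > 0"
  proof (rule ccontr)
    assume "\<not> w2 > 0"
    then have "w2 = 0" using w20 by simp
    then have "w1 * a2 = 0" using e2 by simp
    then show False using hC a20 \<open>w2 = 0\<close> by simp
  qed
  have gt: "w1 > 2 * w2" using e2 a1e d0 a20 w2p
    by (smt (verit) mult_strict_left_mono mult.commute mult.assoc)
  have "J1 Lam b1 b2 w1 w2 = Lam * w1 * w1 / d"
  proof -
    have "1 - (w1 - w2)/d = w1/d" using e1 d0 by (simp add: field_simps)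
    then show ?thesis using J1v by simp
  qed
  moreover have "4 * J2 Lam b1 b2 w1 w2 = 2 * Lam * w1 * w2 / d"
  proof -
    have "(w1 - w2)/d - w2/a2 = w1/(2*d)" using e2 a1e d0 a20 by (simp add: field_simps) (drule arg_cong[where f="\<lambda>x. d*x"], simp add: algebra_simps)
    then show ?thesis using J2v by simp
  qed
  moreover have "Lam * w1 * w1 / d > 2 * Lam * w1 * w2 / d"
    using gt assms(1) d0 hC w20 by (simp add: field_simps)
  ultimately show ?thesis by simp
qed

end
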